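(* Let $T$ be a linear operator in $H$ with $\overline{\operatorname{dom}(T)}=H$. Then for every $\lambda\in W_e(T)$ there exists a sequence of finite-dimensional subspaces $H_n\subset\operatorname{dom}(T)$, $n\in\mathbb N$, such that \[ P_{H_n}\stackrel{s}{\longrightarrow}I\quad\text{and}\quad \operatorname{dist}(\lambda,\sigma(T_{H_n}))\longrightarrow0,\qquad n\to\infty; \] in particular, if $\lambda\in W_e(T)\setminus\sigma(T)$, then $\lambda$ is a spurious eigenvalue of $(T_{H_n})_{n\in\mathbb N}$, i.e. $\lambda\notin\sigma(T)$ and there exist an infinite set $I\subset\mathbb N$ and $\lambda_n\in\sigma(T_{H_n})$, $n\in I$, with $\lambda_n\to\lambda$.
   Context: $H$ is a separable infinite-dimensional complex Hilbert space; $\stackrel{s}{\to}$ denotes strong operator convergence and $x_n\stackrel{w}{\to}x$ weak convergence. For a linear operator $T$ with domain $\operatorname{dom}(T)$, the essential numerical range is $W_e(T)=\{\lambda\in\mathbb C:\exists\,(x_n)\subset\operatorname{dom}(T),\ \|x_n\|=1,\ x_n\stackrel{w}{\to}0,\ \langle Tx_n,x_n\rangle\to\lambda\}$. For a closed subspace $V\subset H$, $P_V$ is the orthogonal projection onto $V$, and if $V\subset\operatorname{dom}(T)$, $T_V:=P_VT|_V$ is the compression of $T$ to $V$, an operator in $V$. $\sigma(\cdot)$ denotes the spectrum. *)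

theory Defs
  imports "HOL-Analysis.Analysis"
begin

text \<open>Model of the separable infinite-dimensional complex Hilbert space H:
  the sequence space l2(N) over the complex numbers, given as a carrier set.\<close>

type_synonym seq = "nat \<Rightarrow> complex"

definition l2 :: "seq set" where
  "l2 = {x. summable (\<lambda>n. (cmod (x n))^2)}"

definition l2inner :: "seq \<Rightarrow> seq \<Rightarrow> complex" where
  "l2inner x y = (\<Sum>n. x n * cnj (y n))"

definition l2norm :: "seq \<Rightarrow> real" where
  "l2norm x = sqrt (\<Sum>n. (cmod (x n))^2)"

definition vadd :: "seq \<Rightarrow> seq \<Rightarrow> seq" where
  "vadd x y = (\<lambda>n. x n + y n)"

definition vdiff :: "seq \<Rightarrow> seq \<Rightarrow> seq" where
  "vdiff x y = (\<lambda>n. x n - y n)"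

definition vscale :: "complex \<Rightarrow> seq \<Rightarrow> seq" where
  "vscale c x = (\<lambda>n. c * x n)"

definition vzero :: seq where
  "vzero = (\<lambda>n. 0)"

definition is_subspace :: "seq set \<Rightarrow> bool" where
  "is_subspace V \<longleftrightarrow> V \<subseteq> l2 \<and> vzero \<in> V \<and>
     (\<forall>x\<in>V. \<forall>y\<in>V. vadd x y \<in> V) \<and> (\<forall>c. \<forall>x\<in>V. vscale c x \<in> V)"

definition dense_in_l2 :: "seq set \<Rightarrow> bool" where
  "dense_in_l2 D \<longleftrightarrow> (\<forall>x\<in>l2. \<forall>e>0. \<exists>y\<in>D. l2norm (vdiff x y) < e)"

definition lin_op :: "seq set \<Rightarrow> (seq \<Rightarrow> seq) \<Rightarrow> bool" where
  "lin_op D T \<longleftrightarrow> is_subspace D \<and> T ` D \<subseteq> l2 \<and>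
     (\<forall>x\<in>D. \<forall>y\<in>D. T (vadd x y) = vadd (T x) (T y)) \<and>
     (\<forall>c. \<forall>x\<in>D. T (vscale c x) = vscale c (T x))"

definition lspan :: "seq set \<Rightarrow> seq set" where
  "lspan B = {x. \<exists>c. x = (\<lambda>n. \<Sum>b\<in>B. c b * b n)}"

definition fin_dim_subspace :: "seq set \<Rightarrow> bool" where
  "fin_dim_subspace V \<longleftrightarrow> (\<exists>B. finite B \<and> B \<subseteq> l2 \<and> V = lspan B)"

definition oproj :: "seq set \<Rightarrow> seq \<Rightarrow> seq" where
  "oproj V x = (THE v. v \<in> V \<and> (\<forall>w\<in>V. l2inner (vdiff x v) w = 0))"

text \<open>Compression T_V = P_V T restricted to V.\<close>
definition compress :: "seq set \<Rightarrow> (seq \<Rightarrow> seq) \<Rightarrow> seq \<Rightarrow> seq" where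
  "compress V T x = oproj V (T x)"

definition op_spectrum :: "seq set \<Rightarrow> seq set \<Rightarrow> (seq \<Rightarrow> seq) \<Rightarrow> complex set" where
  "op_spectrum V D A = {z. \<not> (bij_betw (\<lambda>x. vdiff (A x) (vscale z x)) D V \<and>
      (\<exists>C. \<forall>y\<in>V. l2norm (the_inv_into D (\<lambda>x. vdiff (A x) (vscale z x)) y) \<le> C * l2norm y))}"

definition weak_conv :: "(nat \<Rightarrow> seq) \<Rightarrow> seq \<Rightarrow> bool" where
  "weak_conv x a \<longleftrightarrow> (\<forall>y\<in>l2. (\<lambda>n. l2inner (x n) y) \<longlonglongrightarrow> l2inner a y)"

definition strong_to_id :: "(nat \<Rightarrow> seq \<Rightarrow> seq) \<Rightarrow> bool" where
  "strong_to_id P \<longleftrightarrow> (\<forall>x\<in>l2. (\<lambda>n. l2norm (vdiff (P n x) x)) \<longlonglongrightarrow> 0)"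

definition ess_num_range :: "seq set \<Rightarrow> (seq \<Rightarrow> seq) \<Rightarrow> complex set" where
  "ess_num_range D T = {z. \<exists>x. (\<forall>n. x n \<in> D \<and> l2norm (x n) = 1) \<and> weak_conv x vzero \<and>
      (\<lambda>n. l2inner (T (x n)) (x n)) \<longlonglongrightarrow> z}"

definition spurious_eig :: "seq set \<Rightarrow> (seq \<Rightarrow> seq) \<Rightarrow> (nat \<Rightarrow> seq set) \<Rightarrow> complex \<Rightarrow> bool" where
  "spurious_eig D T Hn z \<longleftrightarrow> z \<notin> op_spectrum l2 D T \<and>
     (\<exists>I \<mu>. infinite I \<and> (\<forall>n\<in>I. \<mu> n \<in> op_spectrum (Hn n) (Hn n) (compress (Hn n) T)) \<and>
        (\<forall>e>0. \<exists>N. \<forall>n\<in>I. n \<ge> N \<longrightarrow> dist (\<mu> n) z < e))"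

end

theory Submission
  imports Defs
begin


lemma l2_iff: "x \<in> l2 \<longleftrightarrow> summable (\<lambda>n. (cmod (x n))^2)"
  by (simp add: l2_def)

lemma vzero_l2[simp]: "vzero \<in> l2"
  by (simp add: l2_def vzero_def)

lemma vscale_l2: "x \<in> l2 \<Longrightarrow> vscale c x \<in> l2"
proof -
  assume "x \<in> l2"
  then have "summable (\<lambda>n. (cmod c)^2 * (cmod (x n))^2)"
    by (intro summable_mult) (simp add: l2_def)
  then show ?thesis
    by (simp add: l2_def vscale_def norm_mult power_mult_distrib)
qed

lemma sq_sum_le: "((p::real) + q)^2 \<le> 2 * p^2 + 2 * q^2"
proof -
  have "2 * p^2 + 2 * q^2 - (p + q)^2 = (p - q)^2" by (simp add: power2_eq_square algebra_simps)
  moreover have "0 \<le> (p - q)^2" by simp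
  ultimately show ?thesis by linarith
qed

lemma sq_add_le: "(cmod (a + b))^2 \<le> 2 * (cmod a)^2 + 2 * (cmod b)^2"
proof -
  have "cmod (a+b) \<le> cmod a + cmod b" by (rule norm_triangle_ineq)
  then have "(cmod (a+b))^2 \<le> (cmod a + cmod b)^2"
    by (simp add: power_mono)
  also have "\<dots> \<le> 2 * (cmod a)^2 + 2 * (cmod b)^2" by (rule sq_sum_le)
  finally show ?thesis .
qed

lemma vadd_l2: "x \<in> l2 \<Longrightarrow> y \<in> l2 \<Longrightarrow> vadd x y \<in> l2"
proof -
  assume a: "x \<in> l2" "y \<in> l2"
  have "summable (\<lambda>n. 2 * (cmod (x n))^2 + 2 * (cmod (y n))^2)"
    using a by (intro summable_add summable_mult) (auto simp: l2_def)
  then show ?thesis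
    unfolding l2_def vadd_def mem_Collect_eq
    by (rule summable_comparison_test'[where N=0]) (simp add: sq_add_le)
qed

lemma vdiff_eq: "vdiff x y = vadd x (vscale (-1) y)"
  by (simp add: vdiff_def vadd_def vscale_def)

lemma vdiff_l2: "x \<in> l2 \<Longrightarrow> y \<in> l2 \<Longrightarrow> vdiff x y \<in> l2"
  by (simp add: vdiff_eq vadd_l2 vscale_l2)

lemma summable_abs_prod:
  assumes "x \<in> l2" "y \<in> l2"
  shows "summable (\<lambda>n. cmod (x n) * cmod (y n))"
proof -
  have "summable (\<lambda>n. (cmod (x n))^2 + (cmod (y n))^2)"
    using assms by (intro summable_add) (auto simp: l2_def)
  moreover have "\<And>n. norm (cmod (x n) * cmod (y n)) \<le> (cmod (x n))^2 + (cmod (y n))^2"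
  proof -
    fix n
    have "0 \<le> (cmod (x n) - cmod (y n))^2" by simp
    moreover have "(cmod (x n) - cmod (y n))^2 = (cmod (x n))^2 + (cmod (y n))^2 - 2 * (cmod (x n) * cmod (y n))"
      by (simp add: power2_eq_square algebra_simps)
    moreover have "norm (cmod (x n) * cmod (y n)) = cmod (x n) * cmod (y n)" by simp
    moreover have "0 \<le> cmod (x n) * cmod (y n)" by simp
    ultimately show "norm (cmod (x n) * cmod (y n)) \<le> (cmod (x n))^2 + (cmod (y n))^2"
      by linarith
  qed
  ultimately show ?thesis by (rule summable_comparison_test'[where N=0])
qed

lemma summable_inner:
  assumes "x \<in> l2" "y \<in> l2"
  shows "summable (\<lambda>n. x n * cnj (y n))"
  by (rule summable_norm_cancel) (use summable_abs_prod[OF assms] in \<open>simp add: norm_mult\<close>)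

lemma inner_add_left:
  assumes "x \<in> l2" "y \<in> l2" "w \<in> l2"
  shows "l2inner (vadd x y) w = l2inner x w + l2inner y w"
  unfolding l2inner_def vadd_def
  by (subst suminf_add[OF summable_inner summable_inner]) (use assms in \<open>auto simp: algebra_simps\<close>)

lemma inner_scale_left:
  assumes "x \<in> l2" "w \<in> l2"
  shows "l2inner (vscale c x) w = c * l2inner x w"
  unfolding l2inner_def vscale_def
  using suminf_mult[OF summable_inner[OF assms], of c] by (simp add: mult.assoc)

lemma inner_cnj:
  assumes "x \<in> l2" "y \<in> l2"
  shows "l2inner y x = cnj (l2inner x y)"
proof -
  have "(\<lambda>n. x n * cnj (y n)) sums l2inner x y" unfolding l2inner_def
    by (rule summable_sums[OF summable_inner[OF assms]])
  then have "(\<lambda>n. cnj (x n * cnj (y n))) sums cnj (l2inner x y)"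
    by (simp only: sums_cnj)
  then show ?thesis unfolding l2inner_def by (simp add: sums_iff mult.commute)
qed



lemma inner_add_right:
  assumes "x \<in> l2" "y \<in> l2" "w \<in> l2"
  shows "l2inner w (vadd x y) = l2inner w x + l2inner w y"
  using assms by (simp add: inner_cnj[of _ w] inner_add_left vadd_l2)

lemma inner_scale_right:
  assumes "x \<in> l2" "w \<in> l2"
  shows "l2inner w (vscale c x) = cnj c * l2inner w x"
  using assms by (simp add: inner_cnj[of _ w] inner_scale_left vscale_l2)

lemma inner_diff_left:
  assumes "x \<in> l2" "y \<in> l2" "w \<in> l2"
  shows "l2inner (vdiff x y) w = l2inner x w - l2inner y w"
  using assms by (simp add: vdiff_eq inner_add_left inner_scale_left vscale_l2)

lemma inner_diff_right:
  assumes "x \<in> l2" "y \<in> l2" "w \<in> l2"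
  shows "l2inner w (vdiff x y) = l2inner w x - l2inner w y"
  using assms by (simp add: vdiff_eq inner_add_right inner_scale_right vscale_l2)

lemma l2_summable: "x \<in> l2 \<Longrightarrow> summable (\<lambda>n. (cmod (x n))^2)"
  by (simp add: l2_def)

lemma l2norm_nonneg: "x \<in> l2 \<Longrightarrow> 0 \<le> l2norm x"
  unfolding l2norm_def by (intro real_sqrt_ge_zero suminf_nonneg) (auto simp: l2_def)

lemma l2norm_sq:
  assumes "x \<in> l2"
  shows "(l2norm x)^2 = (\<Sum>n. (cmod (x n))^2)"
proof -
  have "0 \<le> (\<Sum>n. (cmod (x n))^2)"
    by (rule suminf_nonneg[OF l2_summable[OF assms]]) simp
  then show ?thesis by (simp add: l2norm_def)
qed

lemma inner_self:
  assumes "x \<in> l2"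
  shows "l2inner x x = complex_of_real ((l2norm x)^2)"
proof -
  have e: "\<And>n. x n * cnj (x n) = complex_of_real ((cmod (x n))^2)"
    by (simp only: complex_norm_square)
  have "l2inner x x = (\<Sum>n. complex_of_real ((cmod (x n))^2))"
    unfolding l2inner_def by (simp only: e)
  also have "\<dots> = complex_of_real (\<Sum>n. (cmod (x n))^2)"
    by (rule suminf_of_real[symmetric, OF l2_summable[OF assms]])
  finally show ?thesis by (simp add: l2norm_sq[OF assms])
qed

lemma l2norm_eq_zero:
  assumes "x \<in> l2" "l2norm x = 0"
  shows "x = vzero"
proof -
  have "(\<Sum>n. (cmod (x n))^2) = 0" using l2norm_sq[OF assms(1)] assms(2) by simp
  then have "\<forall>n. (cmod (x n))^2 = 0"
    using suminf_eq_zero_iff[OF l2_summable[OF assms(1)]] by simp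
  then show ?thesis by (auto simp: vzero_def)
qed

lemma inner_self_zero:
  assumes "x \<in> l2" "l2inner x x = 0"
  shows "x = vzero"
  using assms by (intro l2norm_eq_zero) (auto simp: inner_self)

lemma cauchy_schwarz:
  assumes "x \<in> l2" "y \<in> l2"
  shows "cmod (l2inner x y) \<le> l2norm x * l2norm y"
proof -
  let ?A = "\<Sum>n. (cmod (x n))^2" and ?B = "\<Sum>n. (cmod (y n))^2"
  have sA: "summable (\<lambda>n. (cmod (x n))^2)" and sB: "summable (\<lambda>n. (cmod (y n))^2)"
    using assms by (auto simp: l2_def)
  have A0: "0 \<le> ?A" by (rule suminf_nonneg[OF sA]) simp
  have B0: "0 \<le> ?B" by (rule suminf_nonneg[OF sB]) simp
  have part: "(\<Sum>n<N. cmod (x n) * cmod (y n)) \<le> sqrt (?A * ?B)" for N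
  proof (rule real_le_rsqrt)
    have "(\<Sum>n<N. cmod (x n) * cmod (y n))^2 \<le> (\<Sum>n<N. (cmod (x n))^2) * (\<Sum>n<N. (cmod (y n))^2)"
      by (rule Cauchy_Schwarz_ineq_sum)
    also have "\<dots> \<le> ?A * ?B"
      by (intro mult_mono sum_le_suminf[OF sA] sum_le_suminf[OF sB] A0 sum_nonneg) auto
    finally show "(\<Sum>n<N. cmod (x n) * cmod (y n))^2 \<le> ?A * ?B" .
  qed
  have "cmod (l2inner x y) \<le> (\<Sum>n. norm (x n * cnj (y n)))"
    unfolding l2inner_def
    by (rule summable_norm) (use summable_abs_prod[OF assms] in \<open>simp add: norm_mult\<close>)
  also have "\<dots> = (\<Sum>n. cmod (x n) * cmod (y n))" by (simp add: norm_mult)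
  also have "\<dots> \<le> sqrt (?A * ?B)"
    by (rule suminf_le_const[OF summable_abs_prod[OF assms]]) (rule part)
  also have "\<dots> = l2norm x * l2norm y" by (simp add: l2norm_def real_sqrt_mult)
  finally show ?thesis .
qed

lemma l2norm_of_inner:
  assumes "x \<in> l2"
  shows "(l2norm x)^2 = Re (l2inner x x)"
  using assms by (simp add: inner_self)

lemma norm_add_sq:
  assumes "x \<in> l2" "y \<in> l2"
  shows "(l2norm (vadd x y))^2 = (l2norm x)^2 + (l2norm y)^2 + 2 * Re (l2inner x y)"
proof -
  have "l2inner (vadd x y) (vadd x y) = l2inner x x + l2inner x y + l2inner y x + l2inner y y"
    using assms by (simp add: inner_add_left inner_add_right vadd_l2)
  then have "Re (l2inner (vadd x y) (vadd x y)) = Re (l2inner x x) + Re (l2inner y y) + 2 * Re (l2inner x y)"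
    using assms by (simp add: inner_cnj[of x y])
  then show ?thesis using assms by (simp add: l2norm_of_inner vadd_l2)
qed

lemma l2norm_triangle:
  assumes "x \<in> l2" "y \<in> l2"
  shows "l2norm (vadd x y) \<le> l2norm x + l2norm y"
proof -
  have "Re (l2inner x y) \<le> l2norm x * l2norm y"
    using cauchy_schwarz[OF assms] complex_Re_le_cmod order_trans by blast
  then have "(l2norm (vadd x y))^2 \<le> (l2norm x + l2norm y)^2"
    using norm_add_sq[OF assms] by (simp add: power2_eq_square algebra_simps)
  then show ?thesis
    using l2norm_nonneg assms power2_le_imp_le add_nonneg_nonneg by blast
qed

lemma l2norm_scale:
  assumes "x \<in> l2"
  shows "l2norm (vscale c x) = cmod c * l2norm x"
proof -
  have "(\<Sum>n. (cmod (vscale c x n))^2) = (\<Sum>n. (cmod c)^2 * (cmod (x n))^2)"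
    by (simp add: vscale_def norm_mult power_mult_distrib)
  also have "\<dots> = (cmod c)^2 * (\<Sum>n. (cmod (x n))^2)"
    by (rule suminf_mult[OF l2_summable[OF assms]])
  finally show ?thesis by (simp add: l2norm_def real_sqrt_mult)
qed

lemma l2norm_diff_sym: "x \<in> l2 \<Longrightarrow> y \<in> l2 \<Longrightarrow> l2norm (vdiff x y) = l2norm (vdiff y x)"
proof -
  assume a: "x \<in> l2" "y \<in> l2"
  have "vdiff x y = vscale (-1) (vdiff y x)" by (simp add: vdiff_def vscale_def)
  then show ?thesis using a by (simp add: l2norm_scale vdiff_l2)
qed

lemma l2norm_diff_triangle:
  assumes "x \<in> l2" "y \<in> l2" "w \<in> l2"
  shows "l2norm (vdiff x w) \<le> l2norm (vdiff x y) + l2norm (vdiff y w)"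
proof -
  have "vdiff x w = vadd (vdiff x y) (vdiff y w)" by (simp add: vdiff_def vadd_def)
  then show ?thesis using assms by (simp add: l2norm_triangle vdiff_l2)
qed



definition lc :: "seq set \<Rightarrow> (seq \<Rightarrow> complex) \<Rightarrow> seq" where
  "lc B c = (\<lambda>n. \<Sum>b\<in>B. c b * b n)"

lemma lspan_lc: "lspan B = {x. \<exists>c. x = lc B c}"
  by (simp add: lspan_def lc_def)

lemma lc_empty[simp]: "lc {} c = vzero"
  by (simp add: lc_def vzero_def)

lemma lc_insert: "finite B \<Longrightarrow> a \<notin> B \<Longrightarrow> lc (insert a B) c = vadd (vscale (c a) a) (lc B c)"
  by (simp add: lc_def vadd_def vscale_def)

lemma lc_l2: "finite B \<Longrightarrow> B \<subseteq> l2 \<Longrightarrow> lc B c \<in> l2"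
  by (induction B rule: finite_induct) (auto simp: lc_insert vadd_l2 vscale_l2)

lemma inner_zero_right[simp]: "l2inner x vzero = 0"
  by (simp add: l2inner_def vzero_def)

lemma inner_zero_left[simp]: "l2inner vzero x = 0"
  by (simp add: l2inner_def vzero_def)

lemma inner_lc_left:
  assumes "finite B" "B \<subseteq> l2" "w \<in> l2"
  shows "l2inner (lc B c) w = (\<Sum>b\<in>B. c b * l2inner b w)"
  using assms
  by (induction B rule: finite_induct) (auto simp: lc_insert inner_add_left inner_scale_left vscale_l2 lc_l2)

lemma inner_lc_right:
  assumes "finite B" "B \<subseteq> l2" "w \<in> l2"
  shows "l2inner w (lc B c) = (\<Sum>b\<in>B. cnj (c b) * l2inner w b)"
  using assms
  by (induction B rule: finite_induct) (auto simp: lc_insert inner_add_right inner_scale_right vscale_l2 lc_l2)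

lemma lspan_l2: "finite B \<Longrightarrow> B \<subseteq> l2 \<Longrightarrow> lspan B \<subseteq> l2"
  by (auto simp: lspan_lc lc_l2)

lemma lspan_add: "x \<in> lspan B \<Longrightarrow> y \<in> lspan B \<Longrightarrow> vadd x y \<in> lspan B"
proof -
  assume "x \<in> lspan B" "y \<in> lspan B"
  then obtain c d where "x = lc B c" "y = lc B d" by (auto simp: lspan_lc)
  then have "vadd x y = lc B (\<lambda>b. c b + d b)"
    by (simp add: lc_def vadd_def sum.distrib algebra_simps)
  then show ?thesis by (auto simp: lspan_lc)
qed

lemma lspan_scale: "x \<in> lspan B \<Longrightarrow> vscale a x \<in> lspan B"
proof -
  assume "x \<in> lspan B"
  then obtain c where "x = lc B c" by (auto simp: lspan_lc)
  then have "vscale a x = lc B (\<lambda>b. a * c b)"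
    by (simp add: lc_def vscale_def sum_distrib_left algebra_simps)
  then show ?thesis by (auto simp: lspan_lc)
qed

lemma lspan_diff: "x \<in> lspan B \<Longrightarrow> y \<in> lspan B \<Longrightarrow> vdiff x y \<in> lspan B"
  by (simp add: vdiff_eq lspan_add lspan_scale)

lemma lspan_zero: "vzero \<in> lspan B"
proof -
  have "vzero = lc B (\<lambda>b. 0)" by (simp add: lc_def vzero_def)
  then show ?thesis by (auto simp: lspan_lc)
qed

lemma lspan_gen: "finite B \<Longrightarrow> a \<in> B \<Longrightarrow> a \<in> lspan B"
proof -
  assume "finite B" "a \<in> B"
  then have "a = lc B (\<lambda>b. if b = a then 1 else 0)"
    by (auto simp: lc_def if_distrib[where f="\<lambda>t. t * _"] sum.delta cong: if_cong)
  then show ?thesis by (auto simp: lspan_lc)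
qed

lemma lspan_mono: "finite B \<Longrightarrow> B \<subseteq> C \<Longrightarrow> finite C \<Longrightarrow> lspan B \<subseteq> lspan C"
proof
  fix x assume a: "finite B" "B \<subseteq> C" "finite C" "x \<in> lspan B"
  then obtain c where x: "x = lc B c" by (auto simp: lspan_lc)
  have "lc C (\<lambda>b. if b \<in> B then c b else 0) = lc B c"
    unfolding lc_def
  proof
    fix n
    have "(\<Sum>b\<in>C. (if b \<in> B then c b else 0) * b n) = (\<Sum>b\<in>C. if b \<in> B then c b * b n else 0)"
      by (rule sum.cong) auto
    also have "\<dots> = (\<Sum>b\<in>C \<inter> B. c b * b n)"
      using a by (simp add: sum.inter_restrict)
    also have "C \<inter> B = B" using a by auto
    finally show "(\<Sum>b\<in>C. (if b \<in> B then c b else 0) * b n) = (\<Sum>b\<in>B. c b * b n)" by simp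
  qed
  then show "x \<in> lspan C" using x unfolding lspan_lc by (metis (mono_tags) mem_Collect_eq)
qed

lemma lspan_sub_subspace:
  assumes "is_subspace D" "finite B" "B \<subseteq> D"
  shows "lspan B \<subseteq> D"
proof -
  have "lc B c \<in> D" for c
    using assms(2,3)
  proof (induction B rule: finite_induct)
    case empty then show ?case using assms(1) by (simp add: is_subspace_def)
  next
    case (insert a B)
    then show ?case using assms(1) by (simp add: lc_insert is_subspace_def)
  qed
  then show ?thesis by (auto simp: lspan_lc)
qed

lemma orth_lspan_left:
  assumes "finite B" "B \<subseteq> l2" "y \<in> l2" "\<forall>b\<in>B. l2inner y b = 0" "w \<in> lspan B"
  shows "l2inner y w = 0"
proof -
  obtain c where "w = lc B c" using assms(5) by (auto simp: lspan_lc)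
  then show ?thesis using assms by (simp add: inner_lc_right)
qed

lemma orth_lspan_right:
  assumes "finite B" "B \<subseteq> l2" "y \<in> l2" "\<forall>b\<in>B. l2inner b y = 0" "w \<in> lspan B"
  shows "l2inner w y = 0"
proof -
  obtain c where "w = lc B c" using assms(5) by (auto simp: lspan_lc)
  then show ?thesis using assms by (simp add: inner_lc_left)
qed

lemma proj_exists:
  assumes "finite B" "B \<subseteq> l2"
  shows "\<forall>x\<in>l2. \<exists>p\<in>lspan B. \<forall>w\<in>lspan B. l2inner (vdiff x p) w = 0"
  using assms
proof (induction B rule: finite_induct)
  case empty
  have "lspan {} = {vzero}" by (auto simp: lspan_lc)
  then show ?case by auto
next
  case (insert a B)
  have aB: "a \<in> l2" "B \<subseteq> l2" using insert by auto
  have fin: "finite (insert a B)" using insert by auto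
  have sub: "lspan B \<subseteq> lspan (insert a B)" using insert by (intro lspan_mono) auto
  have IH: "\<forall>x\<in>l2. \<exists>p\<in>lspan B. \<forall>w\<in>lspan B. l2inner (vdiff x p) w = 0"
    using insert aB by blast
  obtain pa where pa: "pa \<in> lspan B" "\<forall>w\<in>lspan B. l2inner (vdiff a pa) w = 0"
    using IH aB by blast
  have pal2: "pa \<in> l2" using pa lspan_l2[OF insert(1) aB(2)] by auto
  define r where "r = vdiff a pa"
  have rl2: "r \<in> l2" unfolding r_def using aB pal2 by (simp add: vdiff_l2)
  have rspan: "r \<in> lspan (insert a B)"
    unfolding r_def using pa sub lspan_gen[OF fin] by (intro lspan_diff) auto
  have rB: "\<forall>b\<in>B. l2inner r b = 0"
    using pa lspan_gen[OF insert(1)] unfolding r_def by auto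
  show ?case
  proof
    fix x assume x: "x \<in> l2"
    obtain p where p: "p \<in> lspan B" "\<forall>w\<in>lspan B. l2inner (vdiff x p) w = 0"
      using IH x by blast
    have pl2: "p \<in> l2" using p lspan_l2[OF insert(1) aB(2)] by auto
    define t where "t = l2inner (vdiff x p) r / l2inner r r"
    define q where "q = vadd p (vscale t r)"
    have ql2: "q \<in> l2" unfolding q_def using pl2 rl2 by (simp add: vadd_l2 vscale_l2)
    have qspan: "q \<in> lspan (insert a B)"
      unfolding q_def using p sub rspan by (intro lspan_add lspan_scale) auto
    have e: "vdiff x q = vdiff (vdiff x p) (vscale t r)"
      unfolding q_def by (simp add: vdiff_def vadd_def vscale_def algebra_simps)
    have xpl2: "vdiff x p \<in> l2" using x pl2 by (simp add: vdiff_l2)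
    have orthB: "\<forall>b\<in>B. l2inner (vdiff x q) b = 0"
    proof
      fix b assume b: "b \<in> B"
      then have bl2: "b \<in> l2" using aB by auto
      have "l2inner (vdiff x p) b = 0" using p lspan_gen[OF insert(1) b] by auto
      then show "l2inner (vdiff x q) b = 0"
        using rB b bl2 xpl2 rl2 by (simp add: e inner_diff_left vscale_l2 inner_scale_left)
    qed
    have xql2: "vdiff x q \<in> l2" using x ql2 by (simp add: vdiff_l2)
    have orthr: "l2inner (vdiff x q) r = 0"
    proof (cases "l2inner r r = 0")
      case True
      then have "r = vzero" using inner_self_zero rl2 by blast
      then show ?thesis by simp
    next
      case False
      then show ?thesis using xpl2 rl2
        by (simp add: e inner_diff_left vscale_l2 inner_scale_left t_def)
    qed
    have orthpa: "l2inner (vdiff x q) pa = 0"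
      by (rule orth_lspan_left[OF insert(1) aB(2) xql2 orthB pa(1)])
    have "a = vadd pa r" unfolding r_def by (simp add: vadd_def vdiff_def)
    then have "l2inner (vdiff x q) a = 0"
      using orthpa orthr xql2 pal2 rl2 by (simp add: inner_add_right)
    then have "\<forall>b\<in>insert a B. l2inner (vdiff x q) b = 0" using orthB by auto
    then have "\<forall>w\<in>lspan (insert a B). l2inner (vdiff x q) w = 0"
      using orth_lspan_left[OF fin _ xql2] insert by auto
    then show "\<exists>p\<in>lspan (insert a B). \<forall>w\<in>lspan (insert a B). l2inner (vdiff x p) w = 0"
      using qspan by blast
  qed
qed

lemma proj_unique:
  assumes "finite B" "B \<subseteq> l2" "x \<in> l2"
    and "p1 \<in> lspan B" "\<forall>w\<in>lspan B. l2inner (vdiff x p1) w = 0"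
    and "p2 \<in> lspan B" "\<forall>w\<in>lspan B. l2inner (vdiff x p2) w = 0"
  shows "p1 = p2"
proof -
  have l: "p1 \<in> l2" "p2 \<in> l2" using assms lspan_l2[OF assms(1,2)] by auto
  have d: "vdiff p1 p2 \<in> lspan B" using assms by (simp add: lspan_diff)
  have "vdiff p1 p2 = vdiff (vdiff x p2) (vdiff x p1)" by (simp add: vdiff_def)
  then have "l2inner (vdiff p1 p2) (vdiff p1 p2) = l2inner (vdiff x p2) (vdiff p1 p2) - l2inner (vdiff x p1) (vdiff p1 p2)"
    using assms(3) l by (simp add: inner_diff_left vdiff_l2)
  also have "\<dots> = 0" using assms(5,7) d by simp
  finally have "vdiff p1 p2 = vzero" using inner_self_zero l vdiff_l2 by blast
  then show ?thesis by (auto simp: vdiff_def vzero_def fun_eq_iff)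
qed

lemma oproj_char:
  assumes "finite B" "B \<subseteq> l2" "x \<in> l2"
  shows "oproj (lspan B) x \<in> lspan B \<and> (\<forall>w\<in>lspan B. l2inner (vdiff x (oproj (lspan B) x)) w = 0)"
proof -
  have "\<exists>!p. p \<in> lspan B \<and> (\<forall>w\<in>lspan B. l2inner (vdiff x p) w = 0)"
    using proj_exists[OF assms(1,2)] proj_unique[OF assms] assms(3) by blast
  then show ?thesis unfolding oproj_def by (rule theI')
qed

lemma oproj_eq:
  assumes "finite B" "B \<subseteq> l2" "x \<in> l2" "p \<in> lspan B" "\<forall>w\<in>lspan B. l2inner (vdiff x p) w = 0"
  shows "oproj (lspan B) x = p"
  using proj_unique[OF assms(1-3) _ _ assms(4,5)] oproj_char[OF assms(1-3)] by blast

lemma oproj_best: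
  assumes "finite B" "B \<subseteq> l2" "x \<in> l2" "h \<in> lspan B"
  shows "l2norm (vdiff x (oproj (lspan B) x)) \<le> l2norm (vdiff x h)"
proof -
  let ?p = "oproj (lspan B) x"
  have pc: "?p \<in> lspan B" "\<forall>w\<in>lspan B. l2inner (vdiff x ?p) w = 0" using oproj_char[OF assms(1-3)] by auto
  have l: "?p \<in> l2" "h \<in> l2" using pc assms lspan_l2 by auto
  have ph: "vdiff ?p h \<in> lspan B" using pc assms by (simp add: lspan_diff)
  have e: "vdiff x h = vadd (vdiff x ?p) (vdiff ?p h)" by (simp add: vdiff_def vadd_def)
  have "(l2norm (vdiff x h))^2 = (l2norm (vdiff x ?p))^2 + (l2norm (vdiff ?p h))^2"
    using pc ph l assms(3) by (simp add: e norm_add_sq vdiff_l2)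
  then have "(l2norm (vdiff x ?p))^2 \<le> (l2norm (vdiff x h))^2" by simp
  then show ?thesis
    using power2_le_imp_le l2norm_nonneg vdiff_l2 assms(3) l by blast
qed



lemma lin_opD:
  assumes "lin_op D T"
  shows "is_subspace D" "\<And>x. x \<in> D \<Longrightarrow> T x \<in> l2"
    "\<And>x y. x \<in> D \<Longrightarrow> y \<in> D \<Longrightarrow> T (vadd x y) = vadd (T x) (T y)"
    "\<And>c x. x \<in> D \<Longrightarrow> T (vscale c x) = vscale c (T x)"
  using assms by (auto simp: lin_op_def)

lemma subspaceD:
  assumes "is_subspace D"
  shows "D \<subseteq> l2" "vzero \<in> D" "\<And>x y. x \<in> D \<Longrightarrow> y \<in> D \<Longrightarrow> vadd x y \<in> D"
    "\<And>c x. x \<in> D \<Longrightarrow> vscale c x \<in> D"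
  using assms by (auto simp: is_subspace_def)

lemma subspace_diff: "is_subspace D \<Longrightarrow> x \<in> D \<Longrightarrow> y \<in> D \<Longrightarrow> vdiff x y \<in> D"
  by (simp add: vdiff_eq subspaceD)

lemma T_zero:
  assumes "lin_op D T"
  shows "T vzero = vzero"
proof -
  have z: "vzero \<in> D" using lin_opD(1)[OF assms] subspaceD by blast
  have "vzero = vscale 0 vzero" by (simp add: vscale_def vzero_def)
  then have "T vzero = vscale 0 (T vzero)" using lin_opD(4)[OF assms z] by metis
  then show ?thesis by (simp add: vscale_def vzero_def)
qed

lemma T_diff:
  assumes "lin_op D T" "x \<in> D" "y \<in> D"
  shows "T (vdiff x y) = vdiff (T x) (T y)"
proof -
  have s: "is_subspace D" using lin_opD(1)[OF assms(1)] .
  have "T (vdiff x y) = vadd (T x) (T (vscale (-1) y))"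
    using assms s by (simp add: vdiff_eq lin_opD(3) subspaceD)
  then show ?thesis using assms by (simp add: lin_opD(4) vdiff_eq)
qed

lemma T_lc:
  assumes "lin_op D T" "finite B" "B \<subseteq> D"
  shows "T (lc B c) = (\<lambda>n. \<Sum>b\<in>B. c b * T b n)"
  using assms(2,3)
proof (induction B rule: finite_induct)
  case empty then show ?case using T_zero[OF assms(1)] by (simp add: vzero_def)
next
  case (insert a B)
  have s: "is_subspace D" using lin_opD(1)[OF assms(1)] .
  have lcD: "lc B c \<in> D" using lspan_sub_subspace[OF s insert(1)] insert(4) by (auto simp: lspan_lc)
  have aD: "a \<in> D" using insert by auto
  have "T (lc (insert a B) c) = vadd (vscale (c a) (T a)) (T (lc B c))"
    using insert(1,2) lcD aD s by (simp add: lc_insert lin_opD[OF assms(1)] subspaceD)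
  then show ?case using insert by (simp add: vadd_def vscale_def)
qed

lemma inner_sumf_left:
  assumes "finite B" "\<forall>b\<in>B. f b \<in> l2" "w \<in> l2"
  shows "l2inner (\<lambda>n. \<Sum>b\<in>B. c b * f b n) w = (\<Sum>b\<in>B. c b * l2inner (f b) w)"
  using assms
proof (induction B rule: finite_induct)
  case empty then show ?case by (simp add: vzero_def[symmetric])
next
  case (insert a B)
  have e: "(\<lambda>n. \<Sum>b\<in>insert a B. c b * f b n) = vadd (vscale (c a) (f a)) (\<lambda>n. \<Sum>b\<in>B. c b * f b n)"
    using insert(1,2) by (simp add: vadd_def vscale_def)
  have l: "(\<lambda>n. \<Sum>b\<in>B. c b * f b n) \<in> l2"
    using insert(1,4)
  proof (induction B rule: finite_induct)
    case empty then show ?case by (simp add: vzero_def[symmetric])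
  next
    case (insert a' B')
    then have "(\<lambda>n. \<Sum>b\<in>insert a' B'. c b * f b n) = vadd (vscale (c a') (f a')) (\<lambda>n. \<Sum>b\<in>B'. c b * f b n)"
      by (simp add: vadd_def vscale_def)
    then show ?case using insert by (simp add: vadd_l2 vscale_l2)
  qed
  have "l2inner (vadd (vscale (c a) (f a)) (\<lambda>n. \<Sum>b\<in>B. c b * f b n)) w
      = c a * l2inner (f a) w + (\<Sum>b\<in>B. c b * l2inner (f b) w)"
    using insert l by (simp add: inner_add_left vscale_l2 inner_scale_left)
  then show ?case using insert(1,2) by (simp only: e) simp
qed

lemma spectrum_lemma:
  assumes T: "lin_op D T" and B0: "finite B0" "B0 \<subseteq> D" and u: "u \<in> D" "l2inner u u = 1"
    and ob: "\<forall>b\<in>B0. l2inner b u = 0" and otb: "\<forall>b\<in>B0. l2inner (T b) u = 0"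
  shows "l2inner (T u) u \<in> op_spectrum (lspan (insert u B0)) (lspan (insert u B0)) (compress (lspan (insert u B0)) T)"
proof -
  define B where "B = insert u B0"
  define H where "H = lspan B"
  define \<mu> where "\<mu> = l2inner (T u) u"
  have s: "is_subspace D" using lin_opD(1)[OF T] .
  have Dl2: "D \<subseteq> l2" using subspaceD(1)[OF s] .
  have fin: "finite B" using B0 by (simp add: B_def)
  have BD: "B \<subseteq> D" using B0 u by (simp add: B_def)
  have Bl2: "B \<subseteq> l2" using BD Dl2 by auto
  have ul2: "u \<in> l2" using u Dl2 by auto
  have uB0: "u \<notin> B0" using ob u(2) by auto
  have uH: "u \<in> H" unfolding H_def by (rule lspan_gen[OF fin]) (simp add: B_def)
  let ?f = "\<lambda>x. vdiff (compress H T x) (vscale \<mu> x)"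
  have key: "l2inner (?f h) u = 0" if hH: "h \<in> H" for h
  proof -
    obtain c where hc: "h = lc B c" using hH by (auto simp: H_def lspan_lc)
    have hD: "h \<in> D" using hH lspan_sub_subspace[OF s fin BD] by (auto simp: H_def)
    have hl2: "h \<in> l2" using hD Dl2 by auto
    have Thl2: "T h \<in> l2" using hD lin_opD(2)[OF T] by auto
    have Th: "T h = (\<lambda>n. \<Sum>b\<in>B. c b * T b n)" using T_lc[OF T fin BD] hc by simp
    let ?p = "oproj H (T h)"
    have pc: "?p \<in> H" "\<forall>w\<in>H. l2inner (vdiff (T h) ?p) w = 0"
      using oproj_char[OF fin Bl2 Thl2] by (auto simp: H_def)
    have pl2: "?p \<in> l2" using pc(1) lspan_l2[OF fin Bl2] by (auto simp: H_def)
    have "l2inner (vdiff (T h) ?p) u = 0" using pc uH by auto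
    then have pu: "l2inner ?p u = l2inner (T h) u" using Thl2 pl2 ul2 by (simp add: inner_diff_left)
    have "l2inner (T h) u = (\<Sum>b\<in>B. c b * l2inner (T b) u)"
      unfolding Th using fin BD lin_opD(2)[OF T] ul2 by (intro inner_sumf_left) auto
    also have "\<dots> = c u * \<mu>"
      using B0(1) uB0 otb by (simp add: B_def \<mu>_def)
    finally have Thu: "l2inner (T h) u = c u * \<mu>" .
    have "l2inner h u = (\<Sum>b\<in>B. c b * l2inner b u)"
      unfolding hc by (rule inner_lc_left[OF fin Bl2 ul2])
    also have "\<dots> = c u" using B0(1) uB0 ob u(2) by (simp add: B_def)
    finally have hu: "l2inner h u = c u" .
    show ?thesis
      using pu Thu hu pl2 hl2 ul2
      by (simp add: compress_def inner_diff_left vscale_l2 inner_scale_left)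
  qed
  show ?thesis
  proof (rule ccontr)
    assume "l2inner (T u) u \<notin> op_spectrum (lspan (insert u B0)) (lspan (insert u B0)) (compress (lspan (insert u B0)) T)"
    then have "bij_betw ?f H H" by (simp add: op_spectrum_def H_def B_def \<mu>_def)
    then have "u \<in> ?f ` H" using uH by (simp add: bij_betw_def)
    then obtain h where "h \<in> H" "u = ?f h" by blast
    then have "l2inner u u = 0" using key by simp
    then show False using u(2) by simp
  qed
qed



definition unitv :: "nat \<Rightarrow> seq" where
  "unitv j = (\<lambda>n. if n = j then 1 else 0)"

lemma unitv_l2: "unitv j \<in> l2"
proof -
  have "summable (\<lambda>n. (cmod (unitv j n))^2)"
    by (rule summable_finite[of "{j}"]) (auto simp: unitv_def)
  then show ?thesis by (simp add: l2_def)
qed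

lemma sumf_insert: "finite J \<Longrightarrow> a \<notin> J \<Longrightarrow>
  (\<lambda>n. \<Sum>j\<in>insert a J. c j * g j n) = vadd (vscale (c a) (g a)) (\<lambda>n. \<Sum>j\<in>J. c j * g j n)"
  by (simp add: vadd_def vscale_def)

lemma sumf_l2: "finite J \<Longrightarrow> \<forall>j\<in>J. g j \<in> l2 \<Longrightarrow> (\<lambda>n. \<Sum>j\<in>J. c j * g j n) \<in> l2"
proof (induction J rule: finite_induct)
  case empty then show ?case by (simp add: vzero_def[symmetric])
next
  case (insert a J) then show ?case by (subst sumf_insert[OF insert(1,2)]) (simp add: vadd_l2 vscale_l2)
qed

lemma sumf_lspan: "finite J \<Longrightarrow> \<forall>j\<in>J. g j \<in> lspan B \<Longrightarrow> (\<lambda>n. \<Sum>j\<in>J. c j * g j n) \<in> lspan B"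
proof (induction J rule: finite_induct)
  case empty then show ?case by (simp add: vzero_def[symmetric] lspan_zero)
next
  case (insert a J) then show ?case by (subst sumf_insert[OF insert(1,2)]) (simp add: lspan_add lspan_scale)
qed

lemma sumf_norm: "finite J \<Longrightarrow> \<forall>j\<in>J. g j \<in> l2 \<Longrightarrow>
  l2norm (\<lambda>n. \<Sum>j\<in>J. c j * g j n) \<le> (\<Sum>j\<in>J. cmod (c j) * l2norm (g j))"
proof (induction J rule: finite_induct)
  case empty then show ?case by (simp add: l2norm_def)
next
  case (insert a J)
  have gJ: "\<forall>j\<in>J. g j \<in> l2" using insert(4) by simp
  have l: "(\<lambda>n. \<Sum>j\<in>J. c j * g j n) \<in> l2" by (rule sumf_l2[OF insert(1) gJ])
  have ga: "g a \<in> l2" using insert(4) by simp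
  have "l2norm (vadd (vscale (c a) (g a)) (\<lambda>n. \<Sum>j\<in>J. c j * g j n))
       \<le> l2norm (vscale (c a) (g a)) + l2norm (\<lambda>n. \<Sum>j\<in>J. c j * g j n)"
    using l ga by (intro l2norm_triangle) (auto simp: vscale_l2)
  also have "\<dots> \<le> cmod (c a) * l2norm (g a) + (\<Sum>j\<in>J. cmod (c j) * l2norm (g j))"
    using insert(3)[OF gJ] ga by (simp add: l2norm_scale)
  finally show ?case using insert(1,2) by (subst sumf_insert[OF insert(1,2)]) simp
qed

definition trunc :: "nat \<Rightarrow> seq \<Rightarrow> seq" where
  "trunc N y = (\<lambda>n. if n < N then y n else 0)"

lemma trunc_sumf: "trunc N y = (\<lambda>n. \<Sum>j<N. y j * unitv j n)"
  by (auto simp: trunc_def unitv_def fun_eq_iff if_distrib[where f="\<lambda>t. _ * t"] cong: if_cong)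

lemma tail_small:
  assumes "y \<in> l2" "e > 0"
  shows "\<exists>N. l2norm (vdiff y (trunc N y)) < e"
proof -
  let ?f = "\<lambda>n. (cmod (y n))^2"
  have s: "summable ?f" using assms by (simp add: l2_def)
  have "(\<lambda>N. \<Sum>n<N. ?f n) \<longlonglongrightarrow> suminf ?f" using summable_LIMSEQ[OF s] .
  then obtain N where N: "\<forall>n\<ge>N. dist (\<Sum>i<n. ?f i) (suminf ?f) < e^2"
    using assms(2) by (metis LIMSEQ_iff_nz dist_real_def zero_less_power)
  have d: "vdiff y (trunc N y) = (\<lambda>n. if n < N then 0 else y n)"
    by (auto simp: vdiff_def trunc_def)
  have f2: "(\<lambda>n. (cmod (if n < N then 0 else y n))^2) = (\<lambda>n. ?f n - (if n < N then ?f n else 0))"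
    by auto
  have sf: "summable (\<lambda>n. if n < N then ?f n else 0)"
    by (rule summable_finite[of "{..<N}"]) auto
  have sumf: "(\<Sum>n. if n < N then ?f n else 0) = (\<Sum>n<N. ?f n)"
    by (subst suminf_finite[of "{..<N}"]) auto
  have "(\<Sum>n. (cmod (if n < N then 0 else y n))^2) = suminf ?f - (\<Sum>n<N. ?f n)"
    unfolding f2 by (subst suminf_diff[OF s sf, symmetric]) (simp add: sumf)
  also have "\<dots> < e^2" using N by (auto simp: dist_real_def)
  finally have "(\<Sum>n. (cmod (if n < N then 0 else y n))^2) < e^2" .
  then have "l2norm (vdiff y (trunc N y)) < sqrt (e^2)"
    unfolding d l2norm_def by (simp only: real_sqrt_less_iff)
  then show ?thesis using assms(2) by auto
qed

lemma strong_conv: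
  assumes fin: "\<And>k. finite (B k)" "\<And>k. B k \<subseteq> l2"
    and appr: "\<And>k j. j < k \<Longrightarrow> \<exists>h\<in>lspan (B k). l2norm (vdiff h (unitv j)) \<le> 1 / real (Suc k)"
  shows "strong_to_id (\<lambda>k. oproj (lspan (B k)))"
  unfolding strong_to_id_def
proof (intro ballI LIMSEQ_I)
  fix y :: seq and r :: real
  assume y: "y \<in> l2" and r: "0 < r"
  obtain N where N: "l2norm (vdiff y (trunc N y)) < r/2" using tail_small[OF y, of "r/2"] r by auto
  define S where "S = (\<Sum>j<N. cmod (y j))"
  have S0: "0 \<le> S" unfolding S_def by (simp add: sum_nonneg)
  obtain K where K: "S / r * 2 < real K" using reals_Archimedean2 by blast
  show "\<exists>no. \<forall>k\<ge>no. norm (l2norm (vdiff (oproj (lspan (B k)) y) y) - 0) < r"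
  proof (intro exI allI impI)
    fix k assume k: "max K N \<le> k"
    have "\<forall>j. \<exists>h. j < N \<longrightarrow> h \<in> lspan (B k) \<and> l2norm (vdiff h (unitv j)) \<le> 1 / real (Suc k)"
    proof (intro allI)
      fix j
      show "\<exists>h. j < N \<longrightarrow> h \<in> lspan (B k) \<and> l2norm (vdiff h (unitv j)) \<le> 1 / real (Suc k)"
      proof (cases "j < N")
        case True
        then have "j < k" using k by linarith
        then show ?thesis using appr[of j k] by blast
      qed auto
    qed
    then obtain hs where hs: "\<And>j. j < N \<Longrightarrow> hs j \<in> lspan (B k) \<and> l2norm (vdiff (hs j) (unitv j)) \<le> 1 / real (Suc k)"
      by metis
    have hl2: "\<And>j. j < N \<Longrightarrow> hs j \<in> l2" using hs lspan_l2[OF fin(1) fin(2)] by blast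
    define h where "h = (\<lambda>n. \<Sum>j<N. y j * hs j n)"
    have hspan: "h \<in> lspan (B k)" unfolding h_def by (rule sumf_lspan) (use hs in auto)
    have hl: "h \<in> l2" unfolding h_def by (rule sumf_l2) (use hl2 in auto)
    have tl: "trunc N y \<in> l2" unfolding trunc_sumf by (rule sumf_l2) (auto simp: unitv_l2)
    have e: "vdiff (trunc N y) h = (\<lambda>n. \<Sum>j<N. y j * vdiff (unitv j) (hs j) n)"
      unfolding trunc_sumf h_def vdiff_def fun_eq_iff
      by (simp only: sum_subtractf[symmetric] right_diff_distrib) simp
    have "l2norm (vdiff (trunc N y) h) \<le> (\<Sum>j<N. cmod (y j) * l2norm (vdiff (unitv j) (hs j)))"
      unfolding e by (rule sumf_norm) (auto simp: vdiff_l2 unitv_l2 hl2)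
    also have "\<dots> \<le> (\<Sum>j<N. cmod (y j) * (1 / real (Suc k)))"
    proof (rule sum_mono)
      fix j assume "j \<in> {..<N}"
      then have "l2norm (vdiff (unitv j) (hs j)) \<le> 1 / real (Suc k)"
        using hs[of j] l2norm_diff_sym[of "hs j" "unitv j"] hl2[of j] unitv_l2 by auto
      then show "cmod (y j) * l2norm (vdiff (unitv j) (hs j)) \<le> cmod (y j) * (1 / real (Suc k))"
        using mult_left_mono norm_ge_zero by blast
    qed
    also have "\<dots> = S / real (Suc k)" by (simp add: S_def sum_divide_distrib)
    also have "\<dots> < r / 2"
    proof -
      have "real K \<le> real k" using k by simp
      then have "S / r * 2 < real (Suc k)" using K by simp
      then have "S * 2 < r * real (Suc k)" using r by (simp add: field_simps)
      then show ?thesis by (simp add: field_simps)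
    qed
    finally have t2: "l2norm (vdiff (trunc N y) h) < r / 2" .
    have "l2norm (vdiff y h) \<le> l2norm (vdiff y (trunc N y)) + l2norm (vdiff (trunc N y) h)"
      by (rule l2norm_diff_triangle[OF y tl hl])
    also have "\<dots> < r" using N t2 by simp
    finally have yh: "l2norm (vdiff y h) < r" .
    have "l2norm (vdiff y (oproj (lspan (B k)) y)) \<le> l2norm (vdiff y h)"
      by (rule oproj_best[OF fin(1) fin(2) y hspan])
    moreover have pl: "oproj (lspan (B k)) y \<in> l2"
      using oproj_char[OF fin(1) fin(2) y] lspan_l2[OF fin(1) fin(2)] by blast
    ultimately have "l2norm (vdiff (oproj (lspan (B k)) y) y) < r"
      using yh l2norm_diff_sym[OF pl y] by simp
    then show "norm (l2norm (vdiff (oproj (lspan (B k)) y) y) - 0) < r"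
      using l2norm_nonneg[OF vdiff_l2[OF pl y]] by simp
  qed
qed



lemma zero_times_bdd:
  fixes f g :: "nat \<Rightarrow> complex"
  assumes "f \<longlonglongrightarrow> 0" "\<exists>N. \<forall>n\<ge>N. cmod (g n) \<le> K"
  shows "(\<lambda>n. f n * g n) \<longlonglongrightarrow> 0"
proof (rule tendsto_0_le[OF assms(1), where K=K])
  show "\<forall>\<^sub>F n in sequentially. norm (f n * g n) \<le> norm (f n) * K"
    using assms(2) unfolding eventually_sequentially
    by (auto simp: norm_mult intro!: mult_left_mono)
qed

lemma expand4:
  assumes "a \<in> l2" "b \<in> l2" "a' \<in> l2" "b' \<in> l2"
  shows "l2inner (vdiff a (vscale c b)) (vdiff a' (vscale c' b')) =
    l2inner a a' - cnj c' * l2inner a b' - c * l2inner b a' + c * cnj c' * l2inner b b'"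
  using assms
  by (simp add: inner_diff_left inner_diff_right inner_scale_left inner_scale_right vscale_l2 vdiff_l2
      algebra_simps)

definition Good :: "seq set \<Rightarrow> (seq \<Rightarrow> seq) \<Rightarrow> complex \<Rightarrow> (nat \<Rightarrow> seq) \<Rightarrow> bool" where
  "Good D T z v \<longleftrightarrow> (\<forall>n. v n \<in> D) \<and> (\<forall>g\<in>l2. (\<lambda>n. l2inner (v n) g) \<longlonglongrightarrow> 0) \<and>
     ((\<lambda>n. l2inner (v n) (v n)) \<longlonglongrightarrow> 1) \<and> ((\<lambda>n. l2inner (T (v n)) (v n)) \<longlonglongrightarrow> z) \<and>
     (\<exists>K M. \<forall>m\<ge>M. \<exists>N. \<forall>n\<ge>N. cmod (l2inner (T (v n)) (v m)) \<le> K)"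

definition Orth :: "seq list \<Rightarrow> (nat \<Rightarrow> seq) \<Rightarrow> bool" where
  "Orth gs v \<longleftrightarrow> (\<exists>N. \<forall>n\<ge>N. \<forall>g\<in>set gs. l2inner (v n) g = 0)"

lemma norm4: "cmod (a - b - c + d) \<le> cmod a + cmod b + cmod c + cmod (d::complex)"
proof -
  have "cmod (a - b - c + d) \<le> cmod (a - b - c) + cmod d" by (rule norm_triangle_ineq)
  moreover have "cmod (a - b - c) \<le> cmod (a - b) + cmod c" by (rule norm_triangle_ineq4)
  moreover have "cmod (a - b) \<le> cmod a + cmod b" by (rule norm_triangle_ineq4)
  ultimately show ?thesis by linarith
qed

lemma weak_right:
  assumes "\<forall>g\<in>l2. (\<lambda>n. l2inner (v n) g) \<longlonglongrightarrow> 0" "\<forall>n. v n \<in> l2" "g \<in> l2"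
  shows "(\<lambda>n. l2inner g (v n)) \<longlonglongrightarrow> 0"
proof -
  have "(\<lambda>n. cnj (l2inner (v n) g)) \<longlonglongrightarrow> cnj 0"
    by (rule tendsto_cnj) (use assms in auto)
  then show ?thesis using assms by (simp add: inner_cnj[of "v _" g])
qed

lemma step_lemma:
  assumes T: "lin_op D T" and G: "Good D T z v" and O: "Orth gs v" and g: "g \<in> l2"
    and gsl2: "set gs \<subseteq> l2"
  shows "\<exists>w. Good D T z w \<and> Orth (g # gs) w"
proof -
  have s: "is_subspace D" using lin_opD(1)[OF T] .
  have Dl2: "D \<subseteq> l2" using subspaceD(1)[OF s] .
  have vD: "\<And>n. v n \<in> D" and weak: "\<forall>h\<in>l2. (\<lambda>n. l2inner (v n) h) \<longlonglongrightarrow> 0"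
    and nv: "(\<lambda>n. l2inner (v n) (v n)) \<longlonglongrightarrow> 1" and tv: "(\<lambda>n. l2inner (T (v n)) (v n)) \<longlonglongrightarrow> z"
    using G by (auto simp: Good_def)
  obtain K M where KM: "\<forall>m\<ge>M. \<exists>N. \<forall>n\<ge>N. cmod (l2inner (T (v n)) (v m)) \<le> K"
    using G by (auto simp: Good_def)
  obtain N0 where N0: "\<forall>n\<ge>N0. \<forall>g\<in>set gs. l2inner (v n) g = 0" using O by (auto simp: Orth_def)
  have vl2: "\<And>n. v n \<in> l2" using vD Dl2 by auto
  have Tvl2: "\<And>n. T (v n) \<in> l2" using vD lin_opD(2)[OF T] by auto
  show ?thesis
  proof (cases "\<exists>m0\<ge>max M N0. l2inner (v m0) g \<noteq> 0")
    case False
    then have "Orth (g # gs) v" unfolding Orth_def using N0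
      by (intro exI[of _ "max M N0"]) auto
    then show ?thesis using G by blast
  next
    case True
    then obtain m0 where m0: "m0 \<ge> max M N0" "l2inner (v m0) g \<noteq> 0" by blast
    define \<gamma> where "\<gamma> = l2inner (v m0) g"
    define c where "c n = l2inner (v n) g / \<gamma>" for n
    define w where "w n = vdiff (v n) (vscale (c n) (v m0))" for n
    have c0: "c \<longlonglongrightarrow> 0" unfolding c_def
      by (rule tendsto_divide_zero) (use weak g in auto)
    have wD: "\<And>n. w n \<in> D" unfolding w_def using s vD by (simp add: subspace_diff subspaceD(4))
    have Tw: "\<And>n. T (w n) = vdiff (T (v n)) (vscale (c n) (T (v m0)))"
      unfolding w_def using T vD s by (simp add: T_diff subspaceD(4) lin_opD(4))
    obtain Nc0 where "\<forall>n\<ge>Nc0. norm (c n - 0) < 1" using c0 LIMSEQ_iff zero_less_one by blast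
    then obtain Nc where Nc: "\<forall>n\<ge>Nc. cmod (c n) \<le> 1" by force
    have wk: "\<forall>h\<in>l2. (\<lambda>n. l2inner (w n) h) \<longlonglongrightarrow> 0"
    proof
      fix h assume h: "h \<in> l2"
      have "(\<lambda>n. l2inner (v n) h - c n * l2inner (v m0) h) \<longlonglongrightarrow> 0 - 0 * l2inner (v m0) h"
        by (intro tendsto_intros c0) (use weak h in auto)
      then show "(\<lambda>n. l2inner (w n) h) \<longlonglongrightarrow> 0"
        unfolding w_def using vl2 h by (simp add: inner_diff_left inner_scale_left vscale_l2)
    qed
    have r1: "(\<lambda>n. l2inner (v m0) (v n)) \<longlonglongrightarrow> 0" by (rule weak_right[OF weak]) (auto simp: vl2)
    have r2: "(\<lambda>n. l2inner (v n) (v m0)) \<longlonglongrightarrow> 0" using weak vl2 by auto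
    have r3: "(\<lambda>n. l2inner (T (v m0)) (v n)) \<longlonglongrightarrow> 0" by (rule weak_right[OF weak]) (auto simp: vl2 Tvl2)
    have nw: "(\<lambda>n. l2inner (w n) (w n)) \<longlonglongrightarrow> 1"
    proof -
      have "(\<lambda>n. l2inner (v n) (v n) - cnj (c n) * l2inner (v n) (v m0) - c n * l2inner (v m0) (v n)
          + c n * cnj (c n) * l2inner (v m0) (v m0)) \<longlonglongrightarrow> 1 - cnj 0 * 0 - 0 * 0 + 0 * cnj 0 * l2inner (v m0) (v m0)"
        by (intro tendsto_intros nv c0 r1 r2)
      then show ?thesis unfolding w_def using vl2 by (simp add: expand4)
    qed
    have bK: "\<exists>N. \<forall>n\<ge>N. cmod (l2inner (T (v n)) (v m0)) \<le> K" using KM m0 by auto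
    have t2: "(\<lambda>n. cnj (c n) * l2inner (T (v n)) (v m0)) \<longlonglongrightarrow> 0"
      by (rule zero_times_bdd[OF _ bK]) (intro tendsto_intros c0[THEN tendsto_cnj, simplified])
    have tw: "(\<lambda>n. l2inner (T (w n)) (w n)) \<longlonglongrightarrow> z"
    proof -
      have "(\<lambda>n. l2inner (T (v n)) (v n) - cnj (c n) * l2inner (T (v n)) (v m0) - c n * l2inner (T (v m0)) (v n)
          + c n * cnj (c n) * l2inner (T (v m0)) (v m0)) \<longlonglongrightarrow> z - 0 - 0 * 0 + 0 * cnj 0 * l2inner (T (v m0)) (v m0)"
        by (intro tendsto_intros tv t2 c0 r3)
      then show ?thesis unfolding w_def using vl2 Tvl2 by (simp add: Tw[unfolded w_def] expand4)
    qed
    have "\<forall>r>0. \<exists>no. \<forall>n\<ge>no. norm (l2inner (T (v m0)) (v n) - 0) < r" by (rule LIMSEQ_iff[THEN iffD1, OF r3])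
    then obtain M20 where "\<forall>m\<ge>M20. norm (l2inner (T (v m0)) (v m) - 0) < 1" using zero_less_one by blast
    then obtain M2 where M2: "\<forall>m\<ge>M2. cmod (l2inner (T (v m0)) (v m)) \<le> 1" by force
    obtain Nm0 where Nm0: "\<forall>n\<ge>Nm0. cmod (l2inner (T (v n)) (v m0)) \<le> K" using bK by blast
    define K' where "K' = K + K + 1 + cmod (l2inner (T (v m0)) (v m0))"
    have bnd: "\<forall>m\<ge>max (max M M2) Nc. \<exists>N. \<forall>n\<ge>N. cmod (l2inner (T (w n)) (w m)) \<le> K'"
    proof (intro allI impI)
      fix m assume m: "max (max M M2) Nc \<le> m"
      obtain Nm where Nm: "\<forall>n\<ge>Nm. cmod (l2inner (T (v n)) (v m)) \<le> K" using KM m by auto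
      show "\<exists>N. \<forall>n\<ge>N. cmod (l2inner (T (w n)) (w m)) \<le> K'"
      proof (intro exI allI impI)
        fix n assume n: "max (max Nm Nm0) Nc \<le> n"
        have e: "l2inner (T (w n)) (w m) = l2inner (T (v n)) (v m) - cnj (c m) * l2inner (T (v n)) (v m0)
             - c n * l2inner (T (v m0)) (v m) + c n * cnj (c m) * l2inner (T (v m0)) (v m0)"
          unfolding w_def Tw[unfolded w_def] using vl2 Tvl2 by (simp add: expand4)
        have cm: "cmod (c m) \<le> 1" using Nc m by auto
        have cn: "cmod (c n) \<le> 1" using Nc n by auto
        have a1: "cmod (l2inner (T (v n)) (v m)) \<le> K" using Nm n by auto
        have a2: "cmod (cnj (c m) * l2inner (T (v n)) (v m0)) \<le> 1 * K"
        proof -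
          have "cmod (l2inner (T (v n)) (v m0)) \<le> K" using Nm0 n by auto
          then show ?thesis unfolding norm_mult complex_mod_cnj using cm
            by (intro mult_mono) auto
        qed
        have a3: "cmod (c n * l2inner (T (v m0)) (v m)) \<le> 1 * 1"
          unfolding norm_mult using cn M2 m by (intro mult_mono) auto
        have a4: "cmod (c n * cnj (c m) * l2inner (T (v m0)) (v m0)) \<le> 1 * 1 * cmod (l2inner (T (v m0)) (v m0))"
          unfolding norm_mult complex_mod_cnj using cn cm by (intro mult_mono) auto
        have "cmod (l2inner (T (w n)) (w m)) \<le> cmod (l2inner (T (v n)) (v m)) + cmod (cnj (c m) * l2inner (T (v n)) (v m0))
             + cmod (c n * l2inner (T (v m0)) (v m)) + cmod (c n * cnj (c m) * l2inner (T (v m0)) (v m0))"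
          unfolding e by (rule norm4)
        then show "cmod (l2inner (T (w n)) (w m)) \<le> K'"
          using a1 a2 a3 a4 unfolding K'_def by linarith
      qed
    qed
    have good: "Good D T z w"
      unfolding Good_def using wD wk nw tw bnd by blast
    have "\<forall>n\<ge>N0. \<forall>g'\<in>set (g # gs). l2inner (w n) g' = 0"
    proof (intro allI impI ballI)
      fix n g' assume n: "N0 \<le> n" and g': "g' \<in> set (g # gs)"
      have g'l2: "g' \<in> l2"
      proof (cases "g' = g")
        case True then show ?thesis using g by simp
      next
        case False
        then have "g' \<in> set gs" using g' by simp
        then show ?thesis using gsl2 by auto
      qed
      have ew: "l2inner (w n) g' = l2inner (v n) g' - c n * l2inner (v m0) g'"
        unfolding w_def using vl2 g'l2 by (simp add: inner_diff_left inner_scale_left vscale_l2)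
      show "l2inner (w n) g' = 0"
      proof (cases "g' = g")
        case True
        then show ?thesis using m0(2) unfolding ew c_def \<gamma>_def by simp
      next
        case False
        then have "g' \<in> set gs" using g' by simp
        then show ?thesis unfolding ew using N0 n m0(1) by auto
      qed
    qed
    then have "Orth (g # gs) w" unfolding Orth_def by blast
    then show ?thesis using good by blast
  qed
qed



definition CoreP :: "seq set \<Rightarrow> (seq \<Rightarrow> seq) \<Rightarrow> complex \<Rightarrow> seq set \<Rightarrow> real \<Rightarrow> bool" where
  "CoreP D T z E \<epsilon> \<longleftrightarrow> (\<exists>B0 u. finite B0 \<and> B0 \<subseteq> D \<and> u \<in> D \<and> l2inner u u = 1 \<and>
     (\<forall>b\<in>B0. l2inner b u = 0 \<and> l2inner (T b) u = 0) \<and>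
     (\<forall>e\<in>E. \<exists>b\<in>B0. l2norm (vdiff b e) \<le> \<epsilon>) \<and> cmod (l2inner (T u) u - z) \<le> \<epsilon>)"

lemma orth_all:
  assumes T: "lin_op D T" and G: "Good D T z x"
  shows "set gs \<subseteq> l2 \<Longrightarrow> \<exists>w. Good D T z w \<and> Orth gs w"
proof (induction gs)
  case Nil
  have "Orth [] x" by (simp add: Orth_def)
  then show ?case using G by blast
next
  case (Cons g gs)
  then obtain v where "Good D T z v" "Orth gs v" by auto
  then show ?case using step_lemma[OF T] Cons.prems by auto
qed

lemma vzero_diff: "vdiff e e = vzero"
  by (simp add: vdiff_def vzero_def)

lemma l2norm_vzero: "l2norm vzero = 0"
  by (simp add: l2norm_def vzero_def)

lemma caseB_core:
  assumes T: "lin_op D T" and G: "Good D T z x" and E: "finite E" "E \<subseteq> D" and ep: "\<epsilon> > 0"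
  shows "CoreP D T z E \<epsilon>"
proof -
  have s: "is_subspace D" using lin_opD(1)[OF T] .
  have Dl2: "D \<subseteq> l2" using subspaceD(1)[OF s] .
  obtain es where es: "set es = E" using finite_list[OF E(1)] by blast
  define gs where "gs = es @ map T es"
  have gsl2: "set gs \<subseteq> l2" using es E(2) Dl2 lin_opD(2)[OF T] by (auto simp: gs_def)
  obtain w where Gw: "Good D T z w" and Ow: "Orth gs w" using orth_all[OF T G gsl2] by blast
  have wD: "\<And>n. w n \<in> D" and nw: "(\<lambda>n. l2inner (w n) (w n)) \<longlonglongrightarrow> 1"
    and tw: "(\<lambda>n. l2inner (T (w n)) (w n)) \<longlonglongrightarrow> z"
    using Gw by (auto simp: Good_def)
  obtain N1 where N1: "\<forall>n\<ge>N1. \<forall>g\<in>set gs. l2inner (w n) g = 0" using Ow by (auto simp: Orth_def)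
  have q: "(\<lambda>n. l2inner (T (w n)) (w n) / l2inner (w n) (w n)) \<longlonglongrightarrow> z / 1"
    by (intro tendsto_intros tw nw) simp
  have ev1: "\<forall>\<^sub>F n in sequentially. dist (l2inner (T (w n)) (w n) / l2inner (w n) (w n)) z < \<epsilon>"
    using tendstoD[OF q ep] by simp
  have ev2: "\<forall>\<^sub>F n in sequentially. dist (l2inner (w n) (w n)) 1 < 1"
    using tendstoD[OF nw zero_less_one] .
  have ev3: "\<forall>\<^sub>F n in sequentially. n \<ge> N1" by (simp add: eventually_ge_at_top)
  obtain n where n: "dist (l2inner (T (w n)) (w n) / l2inner (w n) (w n)) z < \<epsilon>"
    "dist (l2inner (w n) (w n)) 1 < 1" "n \<ge> N1"
    using eventually_happens'[OF _ eventually_conj[OF ev1 eventually_conj[OF ev2 ev3]]] by auto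
  have wl2: "w n \<in> l2" using wD Dl2 by auto
  define \<nu> where "\<nu> = l2norm (w n)"
  have ww: "l2inner (w n) (w n) = complex_of_real (\<nu>^2)" using inner_self[OF wl2] by (simp add: \<nu>_def)
  have ww0: "l2inner (w n) (w n) \<noteq> 0" using n(2) by (auto simp: dist_norm)
  then have nu0: "\<nu> \<noteq> 0" using ww by auto
  define u where "u = vscale (complex_of_real (1 / \<nu>)) (w n)"
  have uD: "u \<in> D" unfolding u_def using wD s by (simp add: subspaceD(4))
  have Tu: "T u = vscale (complex_of_real (1 / \<nu>)) (T (w n))"
    unfolding u_def using wD T by (simp add: lin_opD(4))
  have Twl2: "T (w n) \<in> l2" using wD lin_opD(2)[OF T] by auto
  have uu: "l2inner u u = 1"
    unfolding u_def using wl2 nu0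
    by (simp add: inner_scale_left inner_scale_right vscale_l2 ww power2_eq_square)
  have Tuu: "l2inner (T u) u = l2inner (T (w n)) (w n) / l2inner (w n) (w n)"
    apply (subst Tu) unfolding u_def using wl2 Twl2 nu0
    by (simp add: inner_scale_left inner_scale_right vscale_l2 ww power2_eq_square field_simps)
  have orth: "\<And>g. g \<in> set gs \<Longrightarrow> l2inner g u = 0"
  proof -
    fix g assume g: "g \<in> set gs"
    then have gl2: "g \<in> l2" using gsl2 by auto
    have "l2inner u g = 0" unfolding u_def using wl2 gl2 N1 n(3) g
      by (simp add: inner_scale_left)
    then show "l2inner g u = 0" using inner_cnj[of u g] gl2 uD Dl2 by auto
  qed
  have "\<forall>b\<in>E. l2inner b u = 0 \<and> l2inner (T b) u = 0"
    using orth es by (auto simp: gs_def)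
  moreover have "\<forall>e\<in>E. \<exists>b\<in>E. l2norm (vdiff b e) \<le> \<epsilon>"
  proof
    fix e assume "e \<in> E"
    moreover have "l2norm (vdiff e e) \<le> \<epsilon>" using ep by (simp only: vzero_diff l2norm_vzero)
    ultimately show "\<exists>b\<in>E. l2norm (vdiff b e) \<le> \<epsilon>" by blast
  qed
  moreover have "cmod (l2inner (T u) u - z) \<le> \<epsilon>" using n(1) Tuu by (simp add: dist_norm)
  ultimately show ?thesis unfolding CoreP_def using E uD uu by blast
qed



lemma algA:
  fixes em tm \<beta> \<mu> s :: complex
  assumes "\<beta> - \<mu> * s \<noteq> 0"
  shows "em + (- em * \<beta> + tm * s) / (\<beta> - \<mu> * s) + (- tm + \<mu> * em) / (\<beta> - \<mu> * s) * s = 0"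
    and "tm + (- em * \<beta> + tm * s) / (\<beta> - \<mu> * s) * \<mu> + (- tm + \<mu> * em) / (\<beta> - \<mu> * s) * \<beta> = 0"
  using assms by (simp_all add: field_simps)

lemma caseA_core:
  assumes T: "lin_op D T"
    and x: "\<forall>n. x n \<in> D \<and> l2norm (x n) = 1"
    and wk: "\<forall>g\<in>l2. (\<lambda>n. l2inner (x n) g) \<longlonglongrightarrow> 0"
    and mu: "(\<lambda>n. l2inner (T (x n)) (x n)) \<longlonglongrightarrow> z"
    and dpos: "\<delta> > 0" and A: "\<forall>M. \<exists>m\<ge>M. \<forall>N. \<exists>n\<ge>N. \<delta> \<le> cmod (l2inner (T (x n)) (x m))"
    and E: "finite E" "E \<subseteq> D" and ep: "\<epsilon> > 0"
  shows "CoreP D T z E \<epsilon>"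
proof -
  have s: "is_subspace D" using lin_opD(1)[OF T] .
  have Dl2: "D \<subseteq> l2" using subspaceD(1)[OF s] .
  have xD: "\<And>n. x n \<in> D" using x by auto
  have xl2: "\<And>n. x n \<in> l2" using xD Dl2 by auto
  have Txl2: "\<And>n. T (x n) \<in> l2" using xD lin_opD(2)[OF T] by auto
  have xx: "\<And>n. l2inner (x n) (x n) = 1" using x inner_self xl2 by simp
  define Z where "Z = cmod z + 2"
  have Z1: "Z \<ge> 2" by (simp add: Z_def)
  define \<rho> where "\<rho> = \<delta> / (2 * Z)"
  have rho0: "\<rho> > 0" using dpos Z1 by (simp add: \<rho>_def)
  have rho_le: "\<rho> \<le> \<delta> / 2" unfolding \<rho>_def using dpos Z1 by (intro divide_left_mono) auto
  have Zrho: "Z * \<rho> = \<delta> / 2" using Z1 by (simp add: \<rho>_def)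
  define \<eta> where "\<eta> = \<epsilon> / (3 + 2 * Z / \<delta>)"
  have den0: "3 + 2 * Z / \<delta> > 0" using dpos Z1 by (simp add: add_pos_pos)
  have eta0: "\<eta> > 0" using ep den0 by (simp add: \<eta>_def)
  have eta_eq: "\<eta> * (3 + 2 * Z / \<delta>) = \<epsilon>" using den0 by (simp add: \<eta>_def)
  have lim1: "\<And>e. e \<in> E \<Longrightarrow> (\<lambda>m. l2inner e (x m)) \<longlonglongrightarrow> 0"
    by (rule weak_right[OF wk]) (use xl2 E Dl2 in auto)
  have lim2: "\<And>e. e \<in> E \<Longrightarrow> (\<lambda>m. l2inner (T e) (x m)) \<longlonglongrightarrow> 0"
    by (rule weak_right[OF wk]) (use xl2 E lin_opD(2)[OF T] in auto)
  have ev: "\<forall>\<^sub>F m in sequentially. (\<forall>e\<in>E. dist (l2inner e (x m)) 0 < \<eta> \<and> dist (l2inner (T e) (x m)) 0 < \<eta>)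
      \<and> dist (l2inner (T (x m)) (x m)) z < min \<epsilon> 1"
    using ep eta0
    by (intro eventually_conj eventually_ball_finite[OF E(1)] ballI tendstoD[OF mu] tendstoD[OF lim1] tendstoD[OF lim2]) auto
  then obtain M0 where M0: "\<forall>m\<ge>M0. (\<forall>e\<in>E. dist (l2inner e (x m)) 0 < \<eta> \<and> dist (l2inner (T e) (x m)) 0 < \<eta>)
      \<and> dist (l2inner (T (x m)) (x m)) z < min \<epsilon> 1"
    unfolding eventually_sequentially by blast
  obtain m where m: "m \<ge> M0" "\<forall>N. \<exists>n\<ge>N. \<delta> \<le> cmod (l2inner (T (x n)) (x m))" using A by blast
  have em: "\<And>e. e \<in> E \<Longrightarrow> cmod (l2inner e (x m)) < \<eta>" and tm: "\<And>e. e \<in> E \<Longrightarrow> cmod (l2inner (T e) (x m)) < \<eta>"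
    and mz: "cmod (l2inner (T (x m)) (x m) - z) < min \<epsilon> 1"
    using M0 m(1) by (auto simp: dist_norm)
  define \<mu> where "\<mu> = l2inner (T (x m)) (x m)"
  have mubd: "cmod \<mu> \<le> cmod z + 1"
  proof -
    have "cmod \<mu> \<le> cmod (\<mu> - z) + cmod z" using norm_triangle_ineq2[of \<mu> z] by simp
    then show ?thesis using mz by (simp add: \<mu>_def)
  qed
  have "\<forall>\<^sub>F n in sequentially. dist (l2inner (x n) (x m)) 0 < \<rho>"
    by (rule tendstoD[OF _ rho0]) (use wk xl2 in auto)
  then obtain N0 where N0: "\<forall>n\<ge>N0. dist (l2inner (x n) (x m)) 0 < \<rho>"
    unfolding eventually_sequentially by blast
  obtain n where n: "n \<ge> N0" "\<delta> \<le> cmod (l2inner (T (x n)) (x m))" using m(2) by blast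
  define \<beta> where "\<beta> = l2inner (T (x n)) (x m)"
  define sc where "sc = l2inner (x n) (x m)"
  define \<Delta> where "\<Delta> = \<beta> - \<mu> * sc"
  have scb: "cmod sc < \<rho>" using N0 n(1) by (simp add: sc_def dist_norm)
  have betab: "\<delta> \<le> cmod \<beta>" using n(2) by (simp add: \<beta>_def)
  have musc: "cmod (\<mu> * sc) \<le> \<delta> / 2"
  proof -
    have "cmod (\<mu> * sc) \<le> (cmod z + 1) * \<rho>"
      unfolding norm_mult using mubd scb by (intro mult_mono) auto
    also have "\<dots> \<le> Z * \<rho>" using rho0 by (simp add: Z_def)
    finally show ?thesis using Zrho by simp
  qed
  have Dbeta: "cmod \<beta> / 2 \<le> cmod \<Delta>"
  proof -
    have "cmod \<beta> - cmod (\<mu> * sc) \<le> cmod \<Delta>" unfolding \<Delta>_def by (rule norm_triangle_ineq2)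
    then show ?thesis using musc betab by linarith
  qed
  have Ddelta: "\<delta> / 2 \<le> cmod \<Delta>" using Dbeta betab by linarith
  have Dpos: "cmod \<Delta> > 0" using Ddelta dpos by linarith
  have D0: "\<Delta> \<noteq> 0" using Dpos by auto
  define a where "a e = (- l2inner e (x m) * \<beta> + l2inner (T e) (x m) * sc) / \<Delta>" for e
  define b where "b e = (- l2inner (T e) (x m) + \<mu> * l2inner e (x m)) / \<Delta>" for e
  define f where "f e = vadd e (vadd (vscale (a e) (x m)) (vscale (b e) (x n)))" for e
  have abnd: "cmod (a e) \<le> 3 * \<eta>" if e: "e \<in> E" for e
  proof -
    have "cmod (- l2inner e (x m) * \<beta> + l2inner (T e) (x m) * sc)
        \<le> cmod (l2inner e (x m)) * cmod \<beta> + cmod (l2inner (T e) (x m)) * cmod sc"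
      using norm_triangle_ineq[of "- l2inner e (x m) * \<beta>" "l2inner (T e) (x m) * sc"]
      by (simp add: norm_mult)
    also have "\<dots> \<le> \<eta> * cmod \<beta> + \<eta> * \<rho>"
      using em[OF e] tm[OF e] scb eta0 by (intro add_mono mult_mono) auto
    also have "\<dots> \<le> (3 * \<eta>) * cmod \<Delta>"
    proof -
      have "\<eta> * cmod \<beta> \<le> 2 * \<eta> * cmod \<Delta>" using Dbeta eta0 by (simp add: mult_left_mono[of _ _ \<eta>, simplified] field_simps)
      moreover have "\<eta> * \<rho> \<le> \<eta> * cmod \<Delta>" using rho_le Ddelta eta0 by (intro mult_left_mono) auto
      ultimately show ?thesis by linarith
    qed
    finally have numA: "cmod (- l2inner e (x m) * \<beta> + l2inner (T e) (x m) * sc) \<le> (3 * \<eta>) * cmod \<Delta>" .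
    have "cmod (a e) = cmod (- l2inner e (x m) * \<beta> + l2inner (T e) (x m) * sc) / cmod \<Delta>"
      unfolding a_def norm_divide ..
    also have "\<dots> \<le> 3 * \<eta>" by (rule pos_divide_le_eq[OF Dpos, THEN iffD2, OF numA])
    finally show ?thesis .
  qed
  have bbnd: "cmod (b e) \<le> 2 * Z * \<eta> / \<delta>" if e: "e \<in> E" for e
  proof -
    have "cmod (- l2inner (T e) (x m) + \<mu> * l2inner e (x m))
        \<le> cmod (l2inner (T e) (x m)) + cmod \<mu> * cmod (l2inner e (x m))"
      using norm_triangle_ineq[of "- l2inner (T e) (x m)" "\<mu> * l2inner e (x m)"]
      by (simp add: norm_mult)
    also have "\<dots> \<le> \<eta> + (cmod z + 1) * \<eta>"
      using em[OF e] tm[OF e] mubd eta0 by (intro add_mono mult_mono) auto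
    also have "\<dots> = Z * \<eta>" by (simp add: Z_def algebra_simps)
    finally have num: "cmod (- l2inner (T e) (x m) + \<mu> * l2inner e (x m)) \<le> Z * \<eta>" .
    have "cmod (b e) = cmod (- l2inner (T e) (x m) + \<mu> * l2inner e (x m)) / cmod \<Delta>"
      unfolding b_def norm_divide ..
    also have "\<dots> \<le> Z * \<eta> / (\<delta> / 2)"
      using num Ddelta dpos Z1 eta0 by (intro frac_le) auto
    also have "\<dots> = 2 * Z * \<eta> / \<delta>" by simp
    finally show ?thesis .
  qed
  have sD: "\<And>c y. y \<in> D \<Longrightarrow> vscale c y \<in> D" using subspaceD(4)[OF s] by blast
  have aD: "\<And>y y'. y \<in> D \<Longrightarrow> y' \<in> D \<Longrightarrow> vadd y y' \<in> D" using subspaceD(3)[OF s] by blast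
  have fD: "f e \<in> D" if "e \<in> E" for e
    unfolding f_def using that E(2) xD by (intro aD sD) auto
  have fnorm: "l2norm (vdiff (f e) e) \<le> \<epsilon>" if e: "e \<in> E" for e
  proof -
    have "vdiff (f e) e = vadd (vscale (a e) (x m)) (vscale (b e) (x n))"
      unfolding f_def by (simp add: vdiff_def vadd_def vscale_def)
    then have "l2norm (vdiff (f e) e) \<le> l2norm (vscale (a e) (x m)) + l2norm (vscale (b e) (x n))"
      using xl2 by (simp add: l2norm_triangle vscale_l2)
    also have "\<dots> = cmod (a e) + cmod (b e)" using xl2 x by (simp add: l2norm_scale)
    also have "\<dots> \<le> 3 * \<eta> + 2 * Z * \<eta> / \<delta>" using abnd[OF e] bbnd[OF e] by simp
    also have "\<dots> = \<epsilon>" using eta_eq by (simp add: algebra_simps)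
    finally show ?thesis .
  qed
  have fo: "l2inner (f e) (x m) = 0" if e: "e \<in> E" for e
  proof -
    have el2: "e \<in> l2" using e E(2) Dl2 by auto
    have "l2inner (f e) (x m) = l2inner e (x m) + a e * l2inner (x m) (x m) + b e * sc"
      unfolding f_def sc_def using el2 xl2 by (simp add: inner_add_left inner_scale_left vscale_l2 vadd_l2)
    also have "\<dots> = 0" unfolding xx a_def b_def \<Delta>_def using algA(1) D0[unfolded \<Delta>_def] by simp
    finally show ?thesis .
  qed
  have fTo: "l2inner (T (f e)) (x m) = 0" if e: "e \<in> E" for e
  proof -
    have eD: "e \<in> D" using e E(2) by auto
    have Tel2: "T e \<in> l2" using eD lin_opD(2)[OF T] by auto
    have "T (f e) = vadd (T e) (T (vadd (vscale (a e) (x m)) (vscale (b e) (x n))))"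
      unfolding f_def using eD xD by (intro lin_opD(3)[OF T] aD sD) auto
    also have "T (vadd (vscale (a e) (x m)) (vscale (b e) (x n))) = vadd (T (vscale (a e) (x m))) (T (vscale (b e) (x n)))"
      using xD by (intro lin_opD(3)[OF T] sD) auto
    finally have "T (f e) = vadd (T e) (vadd (vscale (a e) (T (x m))) (vscale (b e) (T (x n))))"
      using xD lin_opD(4)[OF T] by simp
    then have "l2inner (T (f e)) (x m) = l2inner (T e) (x m) + a e * \<mu> + b e * \<beta>"
      unfolding \<mu>_def \<beta>_def using Tel2 Txl2 xl2 by (simp add: inner_add_left inner_scale_left vscale_l2 vadd_l2)
    also have "\<dots> = 0" unfolding a_def b_def \<Delta>_def using algA(2) D0[unfolded \<Delta>_def] by simp
    finally show ?thesis .
  qed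
  have c1: "finite (f ` E)" using E(1) by simp
  have c2: "f ` E \<subseteq> D" using fD by auto
  have c3: "\<forall>bb\<in>f ` E. l2inner bb (x m) = 0 \<and> l2inner (T bb) (x m) = 0" using fo fTo by auto
  have c4: "\<forall>e\<in>E. \<exists>bb\<in>f ` E. l2norm (vdiff bb e) \<le> \<epsilon>" using fnorm by blast
  have c5: "cmod (l2inner (T (x m)) (x m) - z) \<le> \<epsilon>" using mz by simp
  show ?thesis unfolding CoreP_def
    by (rule exI[of _ "f ` E"], rule exI[of _ "x m"]) (intro conjI c1 c2 c3 c4 c5 xD xx)
qed



lemma core_all:
  assumes T: "lin_op D T" and z: "z \<in> ess_num_range D T"
  shows "\<And>E \<epsilon>. finite E \<Longrightarrow> E \<subseteq> D \<Longrightarrow> \<epsilon> > 0 \<Longrightarrow> CoreP D T z E \<epsilon>"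
proof -
  fix E \<epsilon> assume E: "finite E" "E \<subseteq> D" and ep: "(\<epsilon>::real) > 0"
  obtain x where x: "\<forall>n. x n \<in> D \<and> l2norm (x n) = 1" and wc: "weak_conv x vzero"
    and mu: "(\<lambda>n. l2inner (T (x n)) (x n)) \<longlonglongrightarrow> z"
    using z unfolding ess_num_range_def by blast
  have wk: "\<forall>g\<in>l2. (\<lambda>n. l2inner (x n) g) \<longlonglongrightarrow> 0" using wc unfolding weak_conv_def by simp
  show "CoreP D T z E \<epsilon>"
  proof (cases "\<exists>\<delta>>0. \<forall>M. \<exists>m\<ge>M. \<forall>N. \<exists>n\<ge>N. \<delta> \<le> cmod (l2inner (T (x n)) (x m))")
    case True
    then obtain \<delta> where d: "\<delta> > 0" "\<forall>M. \<exists>m\<ge>M. \<forall>N. \<exists>n\<ge>N. \<delta> \<le> cmod (l2inner (T (x n)) (x m))"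
      by blast
    show ?thesis by (rule caseA_core[OF T x wk mu d E ep])
  next
    case False
    then have "\<exists>M. \<forall>m\<ge>M. \<exists>N. \<forall>n\<ge>N. cmod (l2inner (T (x n)) (x m)) < 1"
      using zero_less_one by (meson not_le)
    then have bnd: "\<exists>K M. \<forall>m\<ge>M. \<exists>N. \<forall>n\<ge>N. cmod (l2inner (T (x n)) (x m)) \<le> K"
      by (meson less_imp_le)
    have s: "is_subspace D" using lin_opD(1)[OF T] .
    have xl2: "\<And>n. x n \<in> l2" using x subspaceD(1)[OF s] by auto
    have xx: "(\<lambda>n. l2inner (x n) (x n)) \<longlonglongrightarrow> 1"
      using x inner_self xl2 by simp
    have "Good D T z x" unfolding Good_def using x wk xx mu bnd by blast
    then show ?thesis by (rule caseB_core[OF T _ E ep])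
  qed
qed

theorem main_result:
  fixes D :: "seq set" and T :: "seq \<Rightarrow> seq"
  assumes T: "lin_op D T" and dense: "dense_in_l2 D"
  shows "\<forall>z\<in>ess_num_range D T. \<exists>Hn :: nat \<Rightarrow> seq set.
     (\<forall>n. fin_dim_subspace (Hn n) \<and> Hn n \<subseteq> D) \<and>
     strong_to_id (\<lambda>n. oproj (Hn n)) \<and>
     (\<lambda>n. infdist z (op_spectrum (Hn n) (Hn n) (compress (Hn n) T))) \<longlonglongrightarrow> 0 \<and>
     (z \<notin> op_spectrum l2 D T \<longrightarrow> spurious_eig D T Hn z)"
proof
  fix z assume z: "z \<in> ess_num_range D T"
  have s: "is_subspace D" using lin_opD(1)[OF T] .
  have Dl2: "D \<subseteq> l2" using subspaceD(1)[OF s] .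
  define ep where "ep k = 1 / (2 * real (Suc k))" for k
  have ep0: "\<And>k. ep k > 0" by (simp add: ep_def)
  have dd: "\<forall>k j. \<exists>d. j < k \<longrightarrow> d \<in> D \<and> l2norm (vdiff (unitv j) d) < ep k"
    using dense ep0 unitv_l2 unfolding dense_in_l2_def by blast
  then obtain d where d: "\<And>k j. j < k \<Longrightarrow> d k j \<in> D \<and> l2norm (vdiff (unitv j) (d k j)) < ep k"
    by metis
  have stage: "\<forall>k. \<exists>B. \<exists>\<mu>. finite B \<and> B \<subseteq> D \<and>
      (\<forall>j<k. \<exists>h\<in>lspan B. l2norm (vdiff h (unitv j)) \<le> 1 / real (Suc k)) \<and>
      \<mu> \<in> op_spectrum (lspan B) (lspan B) (compress (lspan B) T) \<and> cmod (\<mu> - z) \<le> ep k"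
  proof
    fix k
    define E where "E = d k ` {..<k}"
    have E: "finite E" "E \<subseteq> D" using d by (auto simp: E_def)
    have "CoreP D T z E (ep k)" by (rule core_all[OF T z E ep0])
    then obtain B0 u where B0: "finite B0" "B0 \<subseteq> D" and u: "u \<in> D" "l2inner u u = 1"
      and ob: "\<forall>b\<in>B0. l2inner b u = 0 \<and> l2inner (T b) u = 0"
      and ap: "\<forall>e\<in>E. \<exists>b\<in>B0. l2norm (vdiff b e) \<le> ep k"
      and mz: "cmod (l2inner (T u) u - z) \<le> ep k"
      unfolding CoreP_def by blast
    have sp: "l2inner (T u) u \<in> op_spectrum (lspan (insert u B0)) (lspan (insert u B0)) (compress (lspan (insert u B0)) T)"
      by (rule spectrum_lemma[OF T B0 u]) (use ob in auto)
    have fin: "finite (insert u B0)" using B0 by simp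
    have appr: "\<forall>j<k. \<exists>h\<in>lspan (insert u B0). l2norm (vdiff h (unitv j)) \<le> 1 / real (Suc k)"
    proof (intro allI impI)
      fix j assume j: "j < k"
      have e: "d k j \<in> E" using j by (simp add: E_def)
      then obtain b where b: "b \<in> B0" "l2norm (vdiff b (d k j)) \<le> ep k" using ap by blast
      have bl2: "b \<in> l2" using b B0 Dl2 by auto
      have el2: "d k j \<in> l2" using d[OF j] Dl2 by auto
      have "l2norm (vdiff b (unitv j)) \<le> l2norm (vdiff b (d k j)) + l2norm (vdiff (d k j) (unitv j))"
        by (rule l2norm_diff_triangle[OF bl2 el2 unitv_l2])
      also have "\<dots> \<le> ep k + ep k"
        using b(2) d[OF j] l2norm_diff_sym[OF el2 unitv_l2] by simp
      also have "\<dots> = 1 / real (Suc k)" by (simp add: ep_def field_simps)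
      finally have "l2norm (vdiff b (unitv j)) \<le> 1 / real (Suc k)" .
      moreover have "b \<in> lspan (insert u B0)" using b(1) by (intro lspan_gen[OF fin]) auto
      ultimately show "\<exists>h\<in>lspan (insert u B0). l2norm (vdiff h (unitv j)) \<le> 1 / real (Suc k)" by blast
    qed
    show "\<exists>B. \<exists>\<mu>. finite B \<and> B \<subseteq> D \<and>
      (\<forall>j<k. \<exists>h\<in>lspan B. l2norm (vdiff h (unitv j)) \<le> 1 / real (Suc k)) \<and>
      \<mu> \<in> op_spectrum (lspan B) (lspan B) (compress (lspan B) T) \<and> cmod (\<mu> - z) \<le> ep k"
      using fin B0 u appr sp mz by blast
  qed
  then obtain B where "\<forall>k. \<exists>\<mu>. finite (B k) \<and> B k \<subseteq> D \<and>
      (\<forall>j<k. \<exists>h\<in>lspan (B k). l2norm (vdiff h (unitv j)) \<le> 1 / real (Suc k)) \<and>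
      \<mu> \<in> op_spectrum (lspan (B k)) (lspan (B k)) (compress (lspan (B k)) T) \<and> cmod (\<mu> - z) \<le> ep k"
    by (metis choice)
  then obtain \<mu> where P: "\<And>k. finite (B k) \<and> B k \<subseteq> D \<and>
      (\<forall>j<k. \<exists>h\<in>lspan (B k). l2norm (vdiff h (unitv j)) \<le> 1 / real (Suc k)) \<and>
      \<mu> k \<in> op_spectrum (lspan (B k)) (lspan (B k)) (compress (lspan (B k)) T) \<and> cmod (\<mu> k - z) \<le> ep k"
    by (metis choice)
  define Hn where "Hn k = lspan (B k)" for k
  have finB: "\<And>k. finite (B k)" and BD: "\<And>k. B k \<subseteq> D" using P by auto
  have Bl2: "\<And>k. B k \<subseteq> l2" using BD Dl2 by blast
  have c1: "\<forall>n. fin_dim_subspace (Hn n) \<and> Hn n \<subseteq> D"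
    unfolding Hn_def fin_dim_subspace_def using finB Bl2 lspan_sub_subspace[OF s finB BD] by blast
  have c2: "strong_to_id (\<lambda>n. oproj (Hn n))"
    unfolding Hn_def by (rule strong_conv[OF finB Bl2]) (use P in blast)
  have mub: "\<And>k. cmod (\<mu> k - z) \<le> inverse (real (Suc k))"
  proof -
    fix k
    have "ep k \<le> inverse (real (Suc k))" by (simp add: ep_def field_simps)
    then show "cmod (\<mu> k - z) \<le> inverse (real (Suc k))" using P[of k] by linarith
  qed
  have c3: "(\<lambda>n. infdist z (op_spectrum (Hn n) (Hn n) (compress (Hn n) T))) \<longlonglongrightarrow> 0"
  proof (rule Lim_null_comparison[OF _ LIMSEQ_inverse_real_of_nat])
    show "\<forall>\<^sub>F n in sequentially. norm (infdist z (op_spectrum (Hn n) (Hn n) (compress (Hn n) T))) \<le> inverse (real (Suc n))"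
    proof (rule always_eventually, rule allI)
      fix n
      have "infdist z (op_spectrum (Hn n) (Hn n) (compress (Hn n) T)) \<le> dist z (\<mu> n)"
        using P[of n] by (intro infdist_le) (simp add: Hn_def)
      also have "\<dots> \<le> inverse (real (Suc n))" using mub[of n] by (simp add: dist_norm norm_minus_commute)
      finally show "norm (infdist z (op_spectrum (Hn n) (Hn n) (compress (Hn n) T))) \<le> inverse (real (Suc n))"
        using infdist_nonneg[of z "op_spectrum (Hn n) (Hn n) (compress (Hn n) T)"] by simp
    qed
  qed
  have c4: "z \<notin> op_spectrum l2 D T \<longrightarrow> spurious_eig D T Hn z"
  proof
    assume zn: "z \<notin> op_spectrum l2 D T"
    have conv: "\<forall>e>0. \<exists>N. \<forall>n\<in>UNIV. n \<ge> N \<longrightarrow> dist (\<mu> n) z < e"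
    proof (intro allI impI)
      fix e :: real assume e: "e > 0"
      obtain N where N: "N > 0" "inverse (real N) < e" using ex_inverse_of_nat_less[OF e] by blast
      show "\<exists>N. \<forall>n\<in>UNIV. n \<ge> N \<longrightarrow> dist (\<mu> n) z < e"
      proof (intro exI ballI impI)
        fix n assume n: "N \<le> n"
        have i: "inverse (real (Suc n)) \<le> inverse (real N)" by (rule le_imp_inverse_le) (use N n in auto)
        have "cmod (\<mu> n - z) < e" using mub[of n] i N(2) by linarith
        then show "dist (\<mu> n) z < e" by (simp add: dist_norm)
      qed
    qed
    have "\<forall>n\<in>UNIV. \<mu> n \<in> op_spectrum (Hn n) (Hn n) (compress (Hn n) T)" using P by (simp add: Hn_def)
    then show "spurious_eig D T Hn z" unfolding spurious_eig_def using zn conv infinite_UNIV_nat by blast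
  qed
  show "\<exists>Hn :: nat \<Rightarrow> seq set.
     (\<forall>n. fin_dim_subspace (Hn n) \<and> Hn n \<subseteq> D) \<and>
     strong_to_id (\<lambda>n. oproj (Hn n)) \<and>
     (\<lambda>n. infdist z (op_spectrum (Hn n) (Hn n) (compress (Hn n) T))) \<longlonglongrightarrow> 0 \<and>
     (z \<notin> op_spectrum l2 D T \<longrightarrow> spurious_eig D T Hn z)"
    using c1 c2 c3 c4 by blast
qed


theorem theorem6p3:
  fixes D :: "seq set" and T :: "seq \<Rightarrow> seq"
  assumes "lin_op D T" and "dense_in_l2 D"
  shows "\<forall>z\<in>ess_num_range D T. \<exists>Hn :: nat \<Rightarrow> seq set.
     (\<forall>n. fin_dim_subspace (Hn n) \<and> Hn n \<subseteq> D) \<and>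
     strong_to_id (\<lambda>n. oproj (Hn n)) \<and>
     (\<lambda>n. infdist z (op_spectrum (Hn n) (Hn n) (compress (Hn n) T))) \<longlonglongrightarrow> 0 \<and>
     (z \<notin> op_spectrum l2 D T \<longrightarrow> spurious_eig D T Hn z)"
  by (rule main_result[OF assms])

end
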